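(* Let $(X_n)_{n\ge0}$ be a time-homogeneous Markov chain on $(S,\mathcal S)$ with $m$-step transition probabilities $\mathsf P_x(m,\cdot)$, fix $m\ge1$, and let $V^{(m)}$ be the operator on bounded measurable functions $h$ on $S^2=S\times S$ defined by $$V^{(m)}h(x^1,x^2):=\big(1-\alpha^{(m)}(x^1,x^2)\big)\int_{S^2}h(y)\,K^{(m)}\big((x^1,x^2),dy\big),$$ with operator norm $\|V^{(m)}\|$ taken with respect to the supremum norm. Then for all $x^1,x^2\in S$ and all $n\ge0$, $$\tfrac12\,\|\mu^{x^1}_{nm}-\mu^{x^2}_{nm}\|_{TV}\le\|V^{(m)}\|^n,$$ where $\mu^x_k=\mathsf P_x(k,\cdot)$.
   Context: $S$ is a non-empty topological space with Borel $\sigma$-algebra $\mathcal S$. For $x^1,x^2\in S$, $\alpha^{(m)}(x^1,x^2):=\int\big(\frac{\mathsf P_{x^2}(m,dy)}{\mathsf P_{x^1}(m,dy)}\wedge1\big)\mathsf P_{x^1}(m,dy)$ (ratio = density of the absolutely continuous part), i.e. the total mass of $\mathsf P_{x^1}(m,\cdot)\wedge\mathsf P_{x^2}(m,\cdot)$; note $\alpha^{(m)}(x,x)=1$. $K^{(m)}$ is the $m$-step Markov coupling kernel on $S^2$: from $(x^1,x^2)$ with $x^1\ne x^2$ and $\alpha:=\alpha^{(m)}(x^1,x^2)\in(0,1)$, with probability $\alpha$ both coordinates move to a common point with law $(\mathsf P_{x^1}(m,\cdot)\wedge\mathsf P_{x^2}(m,\cdot))/\alpha$, and with probability $1-\alpha$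 they move independently with laws $(\mathsf P_{x^i}(m,\cdot)-\mathsf P_{x^1}(m,\cdot)\wedge\mathsf P_{x^2}(m,\cdot))/(1-\alpha)$, $i=1,2$ (in the degenerate cases $\alpha\in\{0,1\}$ the corresponding branch is omitted); from a diagonal point $(x,x)$ both coordinates move together with law $\mathsf P_x(m,\cdot)$. $\|\mu-\nu\|_{TV}:=\sup_{A\in\mathcal S}|\mu(A)-\nu(A)|$. *)

theory Defs
  imports "HOL-Probability.Probability"
begin

fun mstep :: "('a::topological_space \<Rightarrow> 'a measure) \<Rightarrow> nat \<Rightarrow> 'a \<Rightarrow> 'a measure" where
  "mstep P 0 x = return borel x"
| "mstep P (Suc k) x = bind (mstep P k x) P"

definition min_measure :: "'a measure \<Rightarrow> 'a measure \<Rightarrow> 'a measure" where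
  "min_measure \<mu> \<nu> = measure_of (space \<mu>) (sets \<mu>)
     (\<lambda>A. \<Sqinter>B\<in>sets \<mu>. emeasure \<mu> (A \<inter> B) + emeasure \<nu> (A - B))"

definition residual_measure :: "'a measure \<Rightarrow> 'a measure \<Rightarrow> 'a measure" where
  "residual_measure \<mu> \<nu> = measure_of (space \<mu>) (sets \<mu>)
     (\<lambda>A. emeasure \<mu> A - emeasure (min_measure \<mu> \<nu>) A)"

definition alpha :: "('a::topological_space \<Rightarrow> 'a measure) \<Rightarrow> nat \<Rightarrow> 'a \<Rightarrow> 'a \<Rightarrow> real" where
  "alpha P m x1 x2 = measure (min_measure (mstep P m x1) (mstep P m x2)) (space borel)"

text \<open>Off the diagonal it is alpha * (common law pushed to the diagonal)
  + (1-alpha) * (product of the normalised residual laws), written unnormalised;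
  the branch with weight 0 is omitted.\<close>
definition Kcoup :: "('a::topological_space \<Rightarrow> 'a measure) \<Rightarrow> nat \<Rightarrow> 'a \<times> 'a \<Rightarrow> ('a \<times> 'a) measure" where
  "Kcoup P m z = (let x1 = fst z; x2 = snd z in
     if x1 = x2 then distr (mstep P m x1) (borel \<Otimes>\<^sub>M borel) (\<lambda>y. (y, y))
     else
       (let \<mu>1 = mstep P m x1; \<mu>2 = mstep P m x2; a = alpha P m x1 x2;
            c = min_measure \<mu>1 \<mu>2 in
        measure_of (space (borel \<Otimes>\<^sub>M borel)) (sets (borel \<Otimes>\<^sub>M borel))
          (\<lambda>C. (if a > 0 then emeasure (distr c (borel \<Otimes>\<^sub>M borel) (\<lambda>y. (y, y))) C else 0)
              + (if a < 1 then ennreal (1 / (1 - a)) *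
                   emeasure (residual_measure \<mu>1 \<mu>2 \<Otimes>\<^sub>M residual_measure \<mu>2 \<mu>1) C
                 else 0))))"

definition Vop :: "('a::topological_space \<Rightarrow> 'a measure) \<Rightarrow> nat \<Rightarrow> ('a \<times> 'a \<Rightarrow> real) \<Rightarrow> 'a \<times> 'a \<Rightarrow> real" where
  "Vop P m h z = (1 - alpha P m (fst z) (snd z)) * integral\<^sup>L (Kcoup P m z) h"

definition Vnorm :: "('a::topological_space \<Rightarrow> 'a measure) \<Rightarrow> nat \<Rightarrow> real" where
  "Vnorm P m = Sup {\<bar>Vop P m h z\<bar> | h z.
      h \<in> borel_measurable (borel \<Otimes>\<^sub>M borel) \<and> (\<forall>y. \<bar>h y\<bar> \<le> 1)}"

definition tv :: "'a::topological_space measure \<Rightarrow> 'a measure \<Rightarrow> real" where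
  "tv \<mu> \<nu> = Sup {\<bar>measure \<mu> A - measure \<nu> A\<bar> | A. A \<in> sets (borel :: 'a measure)}"

end

theory Submission
  imports Defs
begin

lemma mstep_meas:
  assumes P: "P \<in> borel \<rightarrow>\<^sub>M prob_algebra borel"
  shows "mstep P k \<in> borel \<rightarrow>\<^sub>M prob_algebra borel"
proof (induction k)
  case 0
  have "mstep P 0 = return borel" by (rule ext) simp
  then show ?case by simp
next
  case (Suc k)
  have "mstep P (Suc k) = (\<lambda>x. bind (mstep P k x) P)" by (rule ext) simp
  then show ?case using measurable_bind_prob_space[OF Suc P] by simp
qed

lemma mstep_space:
  assumes P: "P \<in> borel \<rightarrow>\<^sub>M prob_algebra borel"
  shows "mstep P k x \<in> space (prob_algebra borel)"
  using measurable_space[OF mstep_meas[OF P, of k], of x] by simp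

lemma mstep_prob:
  assumes P: "P \<in> borel \<rightarrow>\<^sub>M prob_algebra borel"
  shows "prob_space (mstep P k x)" "sets (mstep P k x) = sets borel"
  using mstep_space[OF P, of k x] by (auto simp: space_prob_algebra)

lemma mstep_add:
  assumes P: "P \<in> borel \<rightarrow>\<^sub>M prob_algebra borel"
  shows "mstep P (a + b) x = bind (mstep P a x) (mstep P b)"
proof (induction b)
  case 0
  have "mstep P 0 = return borel" by (rule ext) simp
  then show ?case using bind_return''[OF mstep_prob(2)[OF P]] by simp
next
  case (Suc b)
  have e: "mstep P (Suc b) = (\<lambda>y. bind (mstep P b y) P)" by (rule ext) simp
  have "mstep P (a + Suc b) x = bind (bind (mstep P a x) (mstep P b)) P"
    using Suc by simp
  also have "\<dots> = bind (mstep P a x) (\<lambda>y. bind (mstep P b y) P)"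
  proof (rule bind_assoc)
    show "mstep P b \<in> mstep P a x \<rightarrow>\<^sub>M subprob_algebra borel"
      using measurable_prob_algebraD[OF mstep_meas[OF P]]
      by (subst measurable_cong_sets[OF mstep_prob(2)[OF P] refl])
    show "P \<in> borel \<rightarrow>\<^sub>M subprob_algebra borel" using measurable_prob_algebraD[OF P] .
  qed
  finally show ?case using e by simp
qed

lemma dens:
  assumes M: "finite_measure M" and N: "finite_measure N" and sN: "sets N = sets M"
  obtains L f g where "finite_measure L" "sets L = sets M"
    "f \<in> borel_measurable L" "g \<in> borel_measurable L" "\<And>x. f x \<ge> 0" "\<And>x. g x \<ge> 0"
    "M = density L (\<lambda>x. ennreal (f x))" "N = density L (\<lambda>x. ennreal (g x))"
proof -
  define L where "L = sup_measure' M N"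
  have sL: "sets L = sets M" unfolding L_def using sN by simp
  have spL: "space L = space M" unfolding L_def using sN by simp
  have "emeasure L (space L) \<le> emeasure M (space M) + emeasure N (space M)"
    unfolding spL unfolding L_def
  proof (subst emeasure_sup_measure'[OF sN], simp, rule SUP_least)
    fix Y assume "Y \<in> sets M"
    show "emeasure M (space M \<inter> Y) + emeasure N (space M \<inter> - Y) \<le> emeasure M (space M) + emeasure N (space M)"
      by (intro add_mono emeasure_mono) (auto simp: sN)
  qed
  also have "\<dots> < \<infinity>"
    using finite_measure.emeasure_finite[OF M, of "space M"] finite_measure.emeasure_finite[OF N, of "space M"]
    by (simp add: less_top)
  finally have finL: "finite_measure L" by (intro finite_measureI) simp
  then interpret L: finite_measure L .
  have ac: "absolutely_continuous L K" if "sets K = sets M" "\<And>X. X \<in> sets M \<Longrightarrow> emeasure K X \<le> emeasure L X" for K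
    unfolding absolutely_continuous_def
  proof
    fix X assume "X \<in> null_sets L"
    then have "X \<in> sets M" "emeasure L X = 0" using sL by auto
    then show "X \<in> null_sets K" using that by (auto simp: null_sets_def) (metis le_zero_eq)
  qed
  have dM: "density L (RN_deriv L M) = M"
    by (rule L.density_RN_deriv[OF ac]) (auto simp: sL sN L_def intro: le_emeasure_sup_measure'1[OF sN])
  have dN: "density L (RN_deriv L N) = N"
    by (rule L.density_RN_deriv[OF ac]) (auto simp: sL sN L_def intro: le_emeasure_sup_measure'2[OF sN])
  have real: "density L (\<lambda>x. ennreal (enn2real (RN_deriv L K x))) = K" if dK: "density L (RN_deriv L K) = K"
    and fK: "finite_measure K" for K
  proof -
    have "integral\<^sup>N L (RN_deriv L K) = emeasure (density L (RN_deriv L K)) (space L)"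
      by (simp add: emeasure_density)
    also have "\<dots> \<noteq> \<infinity>" unfolding dK using finite_measure.emeasure_finite[OF fK] by simp
    finally have "AE x in L. RN_deriv L K x \<noteq> \<infinity>" by (intro nn_integral_PInf_AE) auto
    then have "density L (\<lambda>x. ennreal (enn2real (RN_deriv L K x))) = density L (RN_deriv L K)"
      by (intro density_cong) (auto elim!: AE_mp intro!: AE_I2 simp: ennreal_enn2real_if)
    then show ?thesis using dK by simp
  qed
  show ?thesis
    by (rule that[OF finL sL _ _ _ _ real[OF dM M, symmetric] real[OF dN N, symmetric]]) auto
qed

locale dd =
  fixes L :: "'a measure" and f g :: "'a \<Rightarrow> real" and \<mu> \<nu> :: "'a measure"
  assumes finL: "finite_measure L"
    and fm[measurable]: "f \<in> borel_measurable L" and gm[measurable]: "g \<in> borel_measurable L"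
    and fpos: "\<And>x. f x \<ge> 0" and gpos: "\<And>x. g x \<ge> 0"
    and mu: "\<mu> = density L (\<lambda>x. ennreal (f x))" and nu: "\<nu> = density L (\<lambda>x. ennreal (g x))"
    and pmu: "prob_space \<mu>" and pnu: "prob_space \<nu>"
begin

lemma sets_mu: "sets \<mu> = sets L" and sets_nu: "sets \<nu> = sets L"
  and space_mu: "space \<mu> = space L" and space_nu: "space \<nu> = space L"
  by (simp_all add: mu nu)

lemma int_f: "integrable L f"
proof -
  have "integrable \<mu> (\<lambda>x. 1::real)" using finite_measure.integrable_const[OF prob_space.finite_measure[OF pmu]] .
  then have "integrable L (\<lambda>x. f x *\<^sub>R (1::real))"
    unfolding mu by (subst (asm) integrable_density) (auto simp: fpos)
  then show ?thesis by simp
qed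

lemma int_g: "integrable L g"
proof -
  have "integrable \<nu> (\<lambda>x. 1::real)" using finite_measure.integrable_const[OF prob_space.finite_measure[OF pnu]] .
  then have "integrable L (\<lambda>x. g x *\<^sub>R (1::real))"
    unfolding nu by (subst (asm) integrable_density) (auto simp: gpos)
  then show ?thesis by simp
qed

lemma int_bounded:
  assumes h: "h \<in> borel_measurable L" and hb: "\<And>x. \<bar>h x\<bar> \<le> K" and k: "k \<in> {f, g}"
  shows "integrable L (\<lambda>x. k x * h x)"
proof (rule Bochner_Integration.integrable_bound[where f="\<lambda>x. k x * K"])
  show "integrable L (\<lambda>x. k x * K)" using int_f int_g k by auto
  show "(\<lambda>x. k x * h x) \<in> borel_measurable L" using k h by auto
  show "AE x in L. norm (k x * h x) \<le> norm (k x * K)"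
  proof (intro AE_I2)
    fix x
    have "0 \<le> k x" using fpos gpos k by auto
    moreover have "0 \<le> K" using hb[of x] by simp
    ultimately show "norm (k x * h x) \<le> norm (k x * K)"
      using hb[of x] by (simp add: abs_mult mult_left_mono)
  qed
qed

lemma int_mu: "h \<in> borel_measurable L \<Longrightarrow> integral\<^sup>L \<mu> h = (\<integral>x. f x * h x \<partial>L)"
  unfolding mu by (subst integral_density) (auto simp: fpos)

lemma int_nu: "h \<in> borel_measurable L \<Longrightarrow> integral\<^sup>L \<nu> h = (\<integral>x. g x * h x \<partial>L)"
  unfolding nu by (subst integral_density) (auto simp: gpos)

lemma meas_mu: "A \<in> sets L \<Longrightarrow> measure \<mu> A = (\<integral>x. f x * indicator A x \<partial>L)"
  using int_mu[of "indicator A"] sets.sets_into_space[of A L]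
  by (simp add: space_mu Int_absorb2)

lemma meas_nu: "A \<in> sets L \<Longrightarrow> measure \<nu> A = (\<integral>x. g x * indicator A x \<partial>L)"
  using int_nu[of "indicator A"] sets.sets_into_space[of A L]
  by (simp add: space_nu Int_absorb2)

lemma int_f1: "(\<integral>x. f x \<partial>L) = 1"
  using int_mu[of "\<lambda>x. 1"] prob_space.prob_space[OF pmu] by (simp add: prob_space.prob_space[OF pmu])

lemma int_g1: "(\<integral>x. g x \<partial>L) = 1"
  using int_nu[of "\<lambda>x. 1"] prob_space.prob_space[OF pnu] by (simp add: prob_space.prob_space[OF pnu])

lemma osc:
  assumes h: "h \<in> borel_measurable L" and hc: "\<And>x. c \<le> h x" "\<And>x. h x \<le> c + d"
  shows "integral\<^sup>L \<mu> h - integral\<^sup>L \<nu> h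
     \<le> d * (measure \<mu> {x\<in>space L. g x < f x} - measure \<nu> {x\<in>space L. g x < f x})"
proof -
  define B where "B = {x\<in>space L. g x < f x}"
  have B[measurable]: "B \<in> sets L" unfolding B_def by measurable
  have hb: "\<bar>h x\<bar> \<le> \<bar>c\<bar> + \<bar>d\<bar>" for x using hc[of x] by linarith
  have iB: "\<bar>indicator B x :: real\<bar> \<le> 1" for x by (simp add: indicator_def)
  have i1: "integrable L (\<lambda>x. f x * h x)" "integrable L (\<lambda>x. g x * h x)"
    using int_bounded[OF h hb] by auto
  have i2: "integrable L (\<lambda>x. f x * indicator B x)" "integrable L (\<lambda>x. g x * indicator B x)"
    using int_bounded[OF _ iB] by auto
  have "integral\<^sup>L \<mu> h - integral\<^sup>L \<nu> h = (\<integral>x. f x * h x - g x * h x \<partial>L)"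
    using i1 by (simp add: int_mu int_nu h)
  also have "\<dots> \<le> (\<integral>x. d * (f x * indicator B x - g x * indicator B x) + c * (f x - g x) \<partial>L)"
  proof (rule integral_mono)
    show "integrable L (\<lambda>x. f x * h x - g x * h x)" using i1 by auto
    show "integrable L (\<lambda>x. d * (f x * indicator B x - g x * indicator B x) + c * (f x - g x))"
      using i2 int_f int_g by auto
    fix x assume "x \<in> space L"
    show "f x * h x - g x * h x \<le> d * (f x * indicator B x - g x * indicator B x) + c * (f x - g x)"
    proof (cases "x \<in> B")
      case True
      then have "0 \<le> f x - g x" unfolding B_def by auto
      then have "(f x - g x) * h x \<le> (f x - g x) * (c + d)" using hc[of x] by (intro mult_left_mono) auto
      then show ?thesis using True by (simp add: algebra_simps)
    next
      case False
      then have "f x - g x \<le> 0" unfolding B_def using \<open>x \<in> space L\<close> by auto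
      then have "(f x - g x) * h x \<le> (f x - g x) * c" using hc[of x] by (intro mult_left_mono_neg) auto
      then show ?thesis using False by (simp add: algebra_simps)
    qed
  qed
  also have "\<dots> = d * (measure \<mu> B - measure \<nu> B) + c * ((\<integral>x. f x \<partial>L) - (\<integral>x. g x \<partial>L))"
    using i2 int_f int_g by (simp add: meas_mu meas_nu B)
  also have "\<dots> = d * (measure \<mu> B - measure \<nu> B)" by (simp add: int_f1 int_g1)
  finally show ?thesis unfolding B_def .
qed

end

lemma tv_bdd:
  assumes "prob_space \<mu>" "prob_space \<nu>"
  shows "bdd_above {\<bar>measure \<mu> A - measure \<nu> A\<bar> | A. A \<in> sets (borel :: 'a::topological_space measure)}"
proof (rule bdd_aboveI[where M=1], clarify)
  fix A :: "'a set"
  have "0 \<le> measure \<mu> A" "measure \<mu> A \<le> 1" "0 \<le> measure \<nu> A" "measure \<nu> A \<le> 1"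
    using assms by (auto simp: prob_space.prob_le_1)
  then show "\<bar>measure \<mu> A - measure \<nu> A\<bar> \<le> 1" by linarith
qed

lemma tv_upper:
  assumes "prob_space \<mu>" "prob_space \<nu>" "A \<in> sets (borel :: 'a::topological_space measure)"
  shows "\<bar>measure \<mu> A - measure \<nu> A\<bar> \<le> tv \<mu> \<nu>"
  unfolding tv_def by (rule cSup_upper[OF _ tv_bdd[OF assms(1,2)]]) (use assms(3) in blast)

lemma tv_least:
  assumes "\<And>A. A \<in> sets (borel :: 'a::topological_space measure) \<Longrightarrow> \<bar>measure \<mu> A - measure \<nu> A\<bar> \<le> c"
  shows "tv \<mu> \<nu> \<le> c"
  unfolding tv_def by (rule cSup_least) (use assms in auto)

lemma tv_nonneg:
  assumes "prob_space \<mu>" "prob_space \<nu>"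
  shows "0 \<le> tv \<mu> (\<nu> :: 'a::topological_space measure)"
  using tv_upper[OF assms, of "{}"] by simp

lemma Lg:
  fixes \<mu> \<nu> :: "'a::topological_space measure"
  assumes mu: "\<mu> \<in> space (prob_algebra borel)" and nu: "\<nu> \<in> space (prob_algebra borel)"
    and gm: "g \<in> borel_measurable borel" and gd: "\<And>y1 y2. \<bar>g y1 - g y2\<bar> \<le> d"
  shows "\<bar>integral\<^sup>L \<mu> g - integral\<^sup>L \<nu> g\<bar> \<le> d * tv \<mu> \<nu>"
proof -
  have pm: "prob_space \<mu>" "sets \<mu> = sets borel" and pn: "prob_space \<nu>" "sets \<nu> = sets borel"
    using mu nu by (auto simp: space_prob_algebra)
  obtain L f1 f2 where L: "finite_measure L" "sets L = sets \<mu>"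
    "f1 \<in> borel_measurable L" "f2 \<in> borel_measurable L" "\<And>x. f1 x \<ge> 0" "\<And>x. f2 x \<ge> 0"
    "\<mu> = density L (\<lambda>x. ennreal (f1 x))" "\<nu> = density L (\<lambda>x. ennreal (f2 x))"
  proof (rule dens[OF prob_space.finite_measure[OF pm(1)] prob_space.finite_measure[OF pn(1)]])
    show "sets \<nu> = sets \<mu>" using pm pn by simp
  qed (rule that)
  interpret A: dd L f1 f2 \<mu> \<nu> by (rule dd.intro[OF L(1,3,4,5,6,7,8) pm(1) pn(1)])
  interpret B: dd L f2 f1 \<nu> \<mu> by (rule dd.intro[OF L(1,4,3,6,5,8,7) pn(1) pm(1)])
  have sL: "sets L = sets borel" using L pm by simp
  have gL: "g \<in> borel_measurable L" using gm by (subst measurable_cong_sets[OF sL refl])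
  have d0: "0 \<le> d" using gd[of undefined undefined] by simp
  define c where "c = Inf (range g)"
  have bb: "bdd_below (range g)"
  proof (rule bdd_belowI[where m="g undefined - d"])
    fix x assume "x \<in> range g"
    then obtain y where "x = g y" by auto
    then show "g undefined - d \<le> x" using gd[of undefined y] by (simp add: abs_le_iff)
  qed
  have c1: "c \<le> g x" for x unfolding c_def by (rule cInf_lower[OF _ bb]) auto
  have c2: "g x \<le> c + d" for x
  proof -
    have "g x - d \<le> c" unfolding c_def
    proof (rule cInf_greatest)
      fix z assume "z \<in> range g"
      then obtain y where "z = g y" by auto
      then show "g x - d \<le> z" using gd[of x y] by (simp add: abs_le_iff)
    qed auto
    then show ?thesis by simp
  qed
  define B1 where "B1 = {x\<in>space L. f2 x < f1 x}"
  define B2 where "B2 = {x\<in>space L. f1 x < f2 x}"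
  have B: "B1 \<in> sets borel" "B2 \<in> sets borel" unfolding B1_def B2_def sL[symmetric] by measurable
  have 1: "integral\<^sup>L \<mu> g - integral\<^sup>L \<nu> g \<le> d * tv \<mu> \<nu>"
  proof -
    have "integral\<^sup>L \<mu> g - integral\<^sup>L \<nu> g \<le> d * (measure \<mu> B1 - measure \<nu> B1)"
      unfolding B1_def by (rule A.osc[OF gL c1 c2])
    also have "\<dots> \<le> d * tv \<mu> \<nu>"
      using tv_upper[OF pm(1) pn(1) B(1)] d0 by (intro mult_left_mono) auto
    finally show ?thesis .
  qed
  have 2: "integral\<^sup>L \<nu> g - integral\<^sup>L \<mu> g \<le> d * tv \<mu> \<nu>"
  proof -
    have "integral\<^sup>L \<nu> g - integral\<^sup>L \<mu> g \<le> d * (measure \<nu> B2 - measure \<mu> B2)"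
      unfolding B2_def by (rule B.osc[OF gL c1 c2])
    also have "\<dots> \<le> d * tv \<mu> \<nu>"
      using tv_upper[OF pm(1) pn(1) B(2)] d0 by (intro mult_left_mono) auto
    finally show ?thesis .
  qed
  show ?thesis using 1 2 by linarith
qed

lemma measure_of_eqI:
  assumes sD: "sets D = sets M" and F: "\<And>A. A \<in> sets M \<Longrightarrow> F A = emeasure D A"
  shows "measure_of (space M) (sets M) F = D"
proof -
  have "measure_of (space M) (sets M) F = measure_of (space M) (sets M) (emeasure D)"
    by (rule measure_of_eq) (auto simp: sets.sigma_sets_eq F sets.space_closed)
  also have "\<dots> = measure_of (space D) (sets D) (emeasure D)"
    using sD sets_eq_imp_space_eq[OF sD] by simp
  finally show ?thesis by (simp add: measure_of_of_measure)
qed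

context dd
begin

definition "mn x = min (f x) (g x)"

lemma mn_meas[measurable]: "mn \<in> borel_measurable L" unfolding mn_def by measurable

lemma mn_pos: "0 \<le> mn x" "mn x \<le> f x" "mn x \<le> g x" unfolding mn_def using fpos gpos by auto

lemma int_mn: "integrable L mn"
  by (rule Bochner_Integration.integrable_bound[OF int_f]) (auto simp: mn_pos abs_of_nonneg fpos intro!: AE_I2)

lemma int_fmn: "integrable L (\<lambda>x. f x - mn x)" using int_f int_mn by auto
lemma int_gmn: "integrable L (\<lambda>x. g x - mn x)" using int_g int_mn by auto

lemma em_mu: "A \<in> sets L \<Longrightarrow> emeasure \<mu> A = (\<integral>\<^sup>+x. ennreal (f x) * indicator A x \<partial>L)"
  unfolding mu by (simp add: emeasure_density)
lemma em_nu: "A \<in> sets L \<Longrightarrow> emeasure \<nu> A = (\<integral>\<^sup>+x. ennreal (g x) * indicator A x \<partial>L)"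
  unfolding nu by (simp add: emeasure_density)

lemma min_eq: "min_measure \<mu> \<nu> = density L (\<lambda>x. ennreal (mn x))"
  unfolding min_measure_def
proof (rule measure_of_eqI)
  show "sets (density L (\<lambda>x. ennreal (mn x))) = sets \<mu>" by (simp add: sets_mu)
  fix A assume A: "A \<in> sets \<mu>"
  then have A'[measurable]: "A \<in> sets L" by (simp add: sets_mu)
  have rhs: "emeasure (density L (\<lambda>x. ennreal (mn x))) A = (\<integral>\<^sup>+x. ennreal (mn x) * indicator A x \<partial>L)"
    by (simp add: emeasure_density)
  define B0 where "B0 = {x\<in>space L. f x \<le> g x}"
  have B0[measurable]: "B0 \<in> sets L" unfolding B0_def by measurable
  have sum: "emeasure \<mu> (A \<inter> B) + emeasure \<nu> (A - B) =
     (\<integral>\<^sup>+x. ennreal (f x) * indicator (A \<inter> B) x + ennreal (g x) * indicator (A - B) x \<partial>L)"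
    if [measurable]: "B \<in> sets L" for B
    by (simp add: em_mu em_nu nn_integral_add)
  show "(\<Sqinter>B\<in>sets \<mu>. emeasure \<mu> (A \<inter> B) + emeasure \<nu> (A - B)) = emeasure (density L (\<lambda>x. ennreal (mn x))) A"
    unfolding rhs
  proof (rule antisym)
    show "(\<Sqinter>B\<in>sets \<mu>. emeasure \<mu> (A \<inter> B) + emeasure \<nu> (A - B)) \<le> (\<integral>\<^sup>+x. ennreal (mn x) * indicator A x \<partial>L)"
    proof (rule INF_lower2)
      show "B0 \<in> sets \<mu>" by (simp add: sets_mu)
      show "emeasure \<mu> (A \<inter> B0) + emeasure \<nu> (A - B0) \<le> (\<integral>\<^sup>+x. ennreal (mn x) * indicator A x \<partial>L)"
        unfolding sum[OF B0]
        by (intro eq_refl nn_integral_cong) (auto simp: B0_def mn_def indicator_def)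
    qed
    show "(\<integral>\<^sup>+x. ennreal (mn x) * indicator A x \<partial>L) \<le> (\<Sqinter>B\<in>sets \<mu>. emeasure \<mu> (A \<inter> B) + emeasure \<nu> (A - B))"
    proof (rule INF_greatest)
      fix B assume "B \<in> sets \<mu>"
      then have B[measurable]: "B \<in> sets L" by (simp add: sets_mu)
      show "(\<integral>\<^sup>+x. ennreal (mn x) * indicator A x \<partial>L) \<le> emeasure \<mu> (A \<inter> B) + emeasure \<nu> (A - B)"
        unfolding sum[OF B]
        by (intro nn_integral_mono) (auto simp: indicator_def mn_pos intro: ennreal_leI)
    qed
  qed
qed

definition "a = (\<integral>x. mn x \<partial>L)"

lemma a_bounds: "0 \<le> a" "a \<le> 1"
proof -
  show "0 \<le> a" unfolding a_def by (rule integral_nonneg_AE) (auto simp: mn_pos)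
  have "a \<le> (\<integral>x. f x \<partial>L)" unfolding a_def by (rule integral_mono[OF int_mn int_f]) (simp add: mn_pos)
  then show "a \<le> 1" by (simp add: int_f1)
qed

lemma int_fmn_val: "(\<integral>x. f x - mn x \<partial>L) = 1 - a"
  using int_f int_mn int_f1 by (simp add: a_def)

lemma emeasure_density_space:
  assumes "h \<in> borel_measurable L" "integrable L h" "\<And>x. 0 \<le> h x"
  shows "emeasure (density L (\<lambda>x. ennreal (h x))) (space L) = ennreal (\<integral>x. h x \<partial>L)"
proof -
  have "emeasure (density L (\<lambda>x. ennreal (h x))) (space L) = (\<integral>\<^sup>+x. ennreal (h x) \<partial>L)"
    using assms(1) by (simp add: emeasure_density)
  also have "\<dots> = ennreal (\<integral>x. h x \<partial>L)"
    by (rule nn_integral_eq_integral[OF assms(2)]) (simp add: assms(3))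
  finally show ?thesis .
qed

lemma min_mass: "emeasure (min_measure \<mu> \<nu>) (space L) = ennreal a"
  unfolding min_eq a_def by (rule emeasure_density_space) (auto simp: int_mn mn_pos)

lemma min_measure_mass: "measure (min_measure \<mu> \<nu>) (space L) = a"
  using min_mass a_bounds by (simp add: measure_def)

lemma res_eq: "residual_measure \<mu> \<nu> = density L (\<lambda>x. ennreal (f x - mn x))"
  unfolding residual_measure_def
proof (rule measure_of_eqI)
  show "sets (density L (\<lambda>x. ennreal (f x - mn x))) = sets \<mu>" by (simp add: sets_mu)
  fix A assume A: "A \<in> sets \<mu>"
  then have A'[measurable]: "A \<in> sets L" by (simp add: sets_mu)
  have e1: "emeasure \<mu> A = (\<integral>\<^sup>+x. ennreal (f x - mn x) * indicator A x \<partial>L) + (\<integral>\<^sup>+x. ennreal (mn x) * indicator A x \<partial>L)"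
  proof -
    have pw: "ennreal (f x) * indicator A x = ennreal (f x - mn x) * indicator A x + ennreal (mn x) * indicator A x" for x
    proof -
      have "ennreal (f x) = ennreal ((f x - mn x) + mn x)" by simp
      also have "\<dots> = ennreal (f x - mn x) + ennreal (mn x)" by (rule ennreal_plus) (use mn_pos[of x] in auto)
      finally show ?thesis by (simp add: distrib_right)
    qed
    show ?thesis unfolding em_mu[OF A'] pw by (rule nn_integral_add) auto
  qed
  have e2: "emeasure (min_measure \<mu> \<nu>) A = (\<integral>\<^sup>+x. ennreal (mn x) * indicator A x \<partial>L)"
    unfolding min_eq by (simp add: emeasure_density)
  have fin: "(\<integral>\<^sup>+x. ennreal (mn x) * indicator A x \<partial>L) \<noteq> \<infinity>"
  proof -
    have "(\<integral>\<^sup>+x. ennreal (mn x) * indicator A x \<partial>L) \<le> emeasure \<mu> A"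
      unfolding em_mu[OF A'] by (intro nn_integral_mono) (auto simp: indicator_def mn_pos intro: ennreal_leI)
    also have "\<dots> < \<infinity>" using finite_measure.emeasure_finite[OF prob_space.finite_measure[OF pmu]] by (simp add: less_top)
    finally show ?thesis by simp
  qed
  show "emeasure \<mu> A - emeasure (min_measure \<mu> \<nu>) A = emeasure (density L (\<lambda>x. ennreal (f x - mn x))) A"
    unfolding e1 e2 using fin by (simp add: emeasure_density ennreal_add_diff_cancel_right)
qed

lemma res_mass: "emeasure (residual_measure \<mu> \<nu>) (space L) = ennreal (1 - a)"
  unfolding res_eq int_fmn_val[symmetric] by (rule emeasure_density_space) (auto simp: int_fmn mn_pos)

lemma diff_le_1a: "A \<in> sets L \<Longrightarrow> measure \<mu> A - measure \<nu> A \<le> 1 - a"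
proof -
  assume A[measurable]: "A \<in> sets L"
  have iA: "\<bar>indicator A x :: real\<bar> \<le> 1" for x by (simp add: indicator_def)
  have i: "integrable L (\<lambda>x. f x * indicator A x)" "integrable L (\<lambda>x. g x * indicator A x)"
    using int_bounded[OF _ iA] by auto
  have "measure \<mu> A - measure \<nu> A = (\<integral>x. f x * indicator A x - g x * indicator A x \<partial>L)"
    using i by (simp add: meas_mu meas_nu)
  also have "\<dots> \<le> (\<integral>x. f x - mn x \<partial>L)"
    by (rule integral_mono) (use i int_fmn in \<open>auto simp: indicator_def mn_def gpos\<close>)
  finally show ?thesis by (simp add: int_fmn_val)
qed

end

lemma pair_facts:
  fixes \<mu> \<nu> :: "'a::topological_space measure"
  assumes mu: "\<mu> \<in> space (prob_algebra borel)" and nu: "\<nu> \<in> space (prob_algebra borel)"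
  defines "\<alpha> \<equiv> measure (min_measure \<mu> \<nu>) (space borel)"
  shows "sets (min_measure \<mu> \<nu>) = sets borel"
    and "emeasure (min_measure \<mu> \<nu>) (space borel) = ennreal \<alpha>"
    and "0 \<le> \<alpha>" "\<alpha> \<le> 1"
    and "sets (residual_measure \<mu> \<nu>) = sets borel" "sets (residual_measure \<nu> \<mu>) = sets borel"
    and "emeasure (residual_measure \<mu> \<nu>) (space borel) = ennreal (1 - \<alpha>)"
    and "emeasure (residual_measure \<nu> \<mu>) (space borel) = ennreal (1 - \<alpha>)"
    and "\<And>A. A \<in> sets borel \<Longrightarrow> \<bar>measure \<mu> A - measure \<nu> A\<bar> \<le> 1 - \<alpha>"
proof -
  have pm: "prob_space \<mu>" "sets \<mu> = sets borel" and pn: "prob_space \<nu>" "sets \<nu> = sets borel"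
    using mu nu by (auto simp: space_prob_algebra)
  obtain L f1 f2 where L: "finite_measure L" "sets L = sets \<mu>"
    "f1 \<in> borel_measurable L" "f2 \<in> borel_measurable L" "\<And>x. f1 x \<ge> 0" "\<And>x. f2 x \<ge> 0"
    "\<mu> = density L (\<lambda>x. ennreal (f1 x))" "\<nu> = density L (\<lambda>x. ennreal (f2 x))"
  proof (rule dens[OF prob_space.finite_measure[OF pm(1)] prob_space.finite_measure[OF pn(1)]])
    show "sets \<nu> = sets \<mu>" using pm pn by simp
  qed (rule that)
  interpret A: dd L f1 f2 \<mu> \<nu> by (rule dd.intro[OF L(1,3,4,5,6,7,8) pm(1) pn(1)])
  interpret B: dd L f2 f1 \<nu> \<mu> by (rule dd.intro[OF L(1,4,3,6,5,8,7) pn(1) pm(1)])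
  have sL: "sets L = sets borel" using L pm by simp
  have spL: "space L = space borel" using sets_eq_imp_space_eq[OF sL] .
  have mn: "B.mn = A.mn" unfolding A.mn_def B.mn_def by (auto simp: min.commute)
  have aa: "B.a = A.a" unfolding A.a_def B.a_def mn ..
  have al: "\<alpha> = A.a" unfolding \<alpha>_def spL[symmetric] by (rule A.min_measure_mass)
  show "sets (min_measure \<mu> \<nu>) = sets borel" by (simp add: A.min_eq sL)
  show "emeasure (min_measure \<mu> \<nu>) (space borel) = ennreal \<alpha>" using A.min_mass by (simp add: al spL)
  show "0 \<le> \<alpha>" "\<alpha> \<le> 1" using A.a_bounds by (auto simp: al)
  show "sets (residual_measure \<mu> \<nu>) = sets borel" by (simp add: A.res_eq sL)
  show "sets (residual_measure \<nu> \<mu>) = sets borel" by (simp add: B.res_eq sL)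
  show "emeasure (residual_measure \<mu> \<nu>) (space borel) = ennreal (1 - \<alpha>)"
    using A.res_mass by (simp add: al spL)
  show "emeasure (residual_measure \<nu> \<mu>) (space borel) = ennreal (1 - \<alpha>)"
    using B.res_mass by (simp add: al spL aa)
  fix A :: "'a set" assume "A \<in> sets borel"
  then have "A \<in> sets L" by (simp add: sL)
  then show "\<bar>measure \<mu> A - measure \<nu> A\<bar> \<le> 1 - \<alpha>"
    using A.diff_le_1a B.diff_le_1a aa al by fastforce
qed

lemma sum_measure_of:
  assumes s1: "sets D1 = sets M" and s2: "sets D2 = sets M" and C: "C \<in> sets M"
  shows "emeasure (measure_of (space M) (sets M) (\<lambda>C. s * emeasure D1 C + t * emeasure D2 C)) C
    = s * emeasure D1 C + t * emeasure D2 C"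
proof (rule emeasure_measure_of_sigma[OF sets.sigma_algebra_axioms _ _ C])
  show "positive (sets M) (\<lambda>C. s * emeasure D1 C + t * emeasure D2 C)"
    unfolding positive_def by simp
  show "countably_additive (sets M) (\<lambda>C. s * emeasure D1 C + t * emeasure D2 C)"
    unfolding countably_additive_def
  proof (intro allI impI)
    fix A :: "nat \<Rightarrow> _" assume r: "range A \<subseteq> sets M" and d: "disjoint_family A"
    have "(\<Sum>i. s * emeasure D1 (A i) + t * emeasure D2 (A i))
        = (\<Sum>i. s * emeasure D1 (A i)) + (\<Sum>i. t * emeasure D2 (A i))"
      by (rule suminf_add[symmetric]) (auto intro: summableI)
    also have "\<dots> = s * emeasure D1 (\<Union>i. A i) + t * emeasure D2 (\<Union>i. A i)"
      using suminf_emeasure[of A D1] suminf_emeasure[of A D2] r d s1 s2 by simp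
    finally show "(\<Sum>i. s * emeasure D1 (A i) + t * emeasure D2 (A i))
        = s * emeasure D1 (\<Union>(A ` UNIV)) + t * emeasure D2 (\<Union>(A ` UNIV))" .
  qed
qed

lemma diag_meas: "(\<lambda>y. (y, y)) \<in> borel \<rightarrow>\<^sub>M (borel \<Otimes>\<^sub>M borel)"
  by measurable

lemma Kprob:
  fixes P :: "'a::topological_space \<Rightarrow> 'a measure"
  assumes P: "P \<in> borel \<rightarrow>\<^sub>M prob_algebra borel"
  shows "prob_space (Kcoup P m z) \<and> sets (Kcoup P m z) = sets (borel \<Otimes>\<^sub>M borel)"
proof -
  obtain x1 x2 where z: "z = (x1, x2)" by (cases z)
  define \<mu>1 where "\<mu>1 = mstep P m x1"
  define \<mu>2 where "\<mu>2 = mstep P m x2"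
  have m1: "\<mu>1 \<in> space (prob_algebra borel)" and m2: "\<mu>2 \<in> space (prob_algebra borel)"
    unfolding \<mu>1_def \<mu>2_def by (rule mstep_space[OF P])+
  have pm1: "prob_space \<mu>1" "sets \<mu>1 = sets borel" using m1 by (auto simp: space_prob_algebra)
  let ?PB = "borel \<Otimes>\<^sub>M borel :: ('a \<times> 'a) measure"
  show ?thesis
  proof (cases "x1 = x2")
    case True
    have K: "Kcoup P m z = distr \<mu>1 ?PB (\<lambda>y. (y, y))"
      unfolding Kcoup_def z \<mu>1_def using True by simp
    have dm: "(\<lambda>y. (y, y)) \<in> \<mu>1 \<rightarrow>\<^sub>M ?PB"
      using diag_meas by (subst measurable_cong_sets[OF pm1(2) refl])
    show ?thesis unfolding K using prob_space.prob_space_distr[OF pm1(1) dm] by simp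
  next
    case False
    define a where "a = alpha P m x1 x2"
    define c where "c = min_measure \<mu>1 \<mu>2"
    define r1 where "r1 = residual_measure \<mu>1 \<mu>2"
    define r2 where "r2 = residual_measure \<mu>2 \<mu>1"
    have a: "a = measure (min_measure \<mu>1 \<mu>2) (space borel)"
      unfolding a_def alpha_def \<mu>1_def \<mu>2_def ..
    note pf = pair_facts[OF m1 m2, folded a, folded c_def r1_def r2_def]
    define D1 where "D1 = distr c ?PB (\<lambda>y. (y, y))"
    define D2 where "D2 = r1 \<Otimes>\<^sub>M r2"
    define s where "s = (if 0 < a then 1 else (0::ennreal))"
    define t where "t = (if a < 1 then ennreal (1 / (1 - a)) else 0)"
    have K: "Kcoup P m z = measure_of (space ?PB) (sets ?PB) (\<lambda>C. s * emeasure D1 C + t * emeasure D2 C)"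
      unfolding Kcoup_def z using False
      by (simp add: Let_def \<mu>1_def[symmetric] \<mu>2_def[symmetric] a_def[symmetric] c_def[symmetric]
          r1_def[symmetric] r2_def[symmetric] D1_def[symmetric] D2_def[symmetric] s_def t_def)
    have sD1: "sets D1 = sets ?PB" unfolding D1_def by simp
    have sD2: "sets D2 = sets ?PB" unfolding D2_def by (rule sets_pair_measure_cong) (use pf in auto)
    have sK: "sets (Kcoup P m z) = sets ?PB" unfolding K by simp
    have spK: "space (Kcoup P m z) = space ?PB" unfolding K by simp
    have dm: "(\<lambda>y. (y, y)) \<in> c \<rightarrow>\<^sub>M ?PB"
      using diag_meas by (subst measurable_cong_sets[OF pf(1) refl])
    have spc: "space c = space borel" using sets_eq_imp_space_eq[OF pf(1)] .
    have e1: "emeasure D1 (space ?PB) = ennreal a"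
    proof -
      have "emeasure D1 (space ?PB) = emeasure c ((\<lambda>y. (y, y)) -` space ?PB \<inter> space c)"
        unfolding D1_def by (rule emeasure_distr[OF dm sets.top])
      also have "(\<lambda>y. (y, y)) -` space ?PB \<inter> space c = space borel"
        by (auto simp: space_pair_measure spc)
      finally show ?thesis using pf(2) by simp
    qed
    have spr1: "space r1 = space borel" using sets_eq_imp_space_eq[OF pf(5)] .
    have spr2: "space r2 = space borel" using sets_eq_imp_space_eq[OF pf(6)] .
    interpret r2: finite_measure r2 by (rule finite_measureI) (use pf(8) in \<open>simp add: spr2\<close>)
    have e2: "emeasure D2 (space ?PB) = ennreal (1 - a) * ennreal (1 - a)"
    proof -
      have "emeasure D2 (space ?PB) = emeasure (r1 \<Otimes>\<^sub>M r2) (space r1 \<times> space r2)"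
        unfolding D2_def by (simp add: space_pair_measure spr1 spr2)
      also have "\<dots> = emeasure r1 (space r1) * emeasure r2 (space r2)"
        by (rule r2.emeasure_pair_measure_Times) auto
      finally show ?thesis using pf(7,8) by (simp add: spr1 spr2)
    qed
    have tot: "s * ennreal a + t * (ennreal (1 - a) * ennreal (1 - a)) = 1"
    proof (cases "0 < a")
      case True
      show ?thesis
      proof (cases "a < 1")
        case True
        have "t * (ennreal (1 - a) * ennreal (1 - a)) = ennreal (1 / (1 - a) * ((1 - a) * (1 - a)))"
          using True by (simp add: t_def ennreal_mult[symmetric])
        also have "\<dots> = ennreal (1 - a)" using True by simp
        finally show ?thesis using \<open>0 < a\<close> True by (simp add: s_def ennreal_plus[symmetric] del: ennreal_plus)
      next
        case False
        then have "a = 1" using pf(4) by simp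
        then show ?thesis by (simp add: s_def t_def)
      qed
    next
      case False
      then have "a = 0" using pf(3) by simp
      then show ?thesis by (simp add: s_def t_def)
    qed
    have "emeasure (Kcoup P m z) (space (Kcoup P m z)) = 1"
      unfolding spK unfolding K
      by (subst sum_measure_of[OF sD1 sD2]) (auto simp: e1 e2 tot)
    then show ?thesis using sK by (auto intro!: prob_spaceI)
  qed
qed

lemma tv_le1:
  assumes "prob_space \<mu>" "prob_space \<nu>"
  shows "tv \<mu> (\<nu> :: 'a::topological_space measure) \<le> 1"
proof (rule tv_least)
  fix A :: "'a set"
  have "0 \<le> measure \<mu> A" "measure \<mu> A \<le> 1" "0 \<le> measure \<nu> A" "measure \<nu> A \<le> 1"
    using assms by (auto simp: prob_space.prob_le_1)
  then show "\<bar>measure \<mu> A - measure \<nu> A\<bar> \<le> 1" by linarith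
qed

lemma prob_int_bound:
  assumes K: "prob_space K" and h: "\<And>y. \<bar>h y\<bar> \<le> (1::real)"
  shows "\<bar>integral\<^sup>L K h\<bar> \<le> 1"
proof (cases "integrable K h")
  case True
  have "integral\<^sup>L K h \<le> 1"
    by (rule prob_space.integral_le_const[OF K True]) (use h in \<open>auto simp: abs_le_iff\<close>)
  moreover have "-1 \<le> integral\<^sup>L K h"
    by (rule prob_space.integral_ge_const[OF K True]) (use h in \<open>auto simp: abs_le_iff\<close>)
  ultimately show ?thesis by linarith
next
  case False
  then show ?thesis by (simp add: not_integrable_integral_eq)
qed

lemma alpha_bounds:
  assumes P: "P \<in> borel \<rightarrow>\<^sub>M prob_algebra borel"
  shows "0 \<le> alpha P m x1 x2" "alpha P m x1 x2 \<le> 1"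
  using pair_facts(3,4)[OF mstep_space[OF P] mstep_space[OF P], of m x1 m x2]
  unfolding alpha_def by auto

lemma Vop_bound:
  assumes P: "P \<in> borel \<rightarrow>\<^sub>M prob_algebra borel" and h: "\<And>y. \<bar>h y\<bar> \<le> (1::real)"
  shows "\<bar>Vop P m h z\<bar> \<le> 1"
proof -
  have K: "prob_space (Kcoup P m z)" using Kprob[OF P] by blast
  have i: "\<bar>integral\<^sup>L (Kcoup P m z) h\<bar> \<le> 1" by (rule prob_int_bound[OF K h])
  have a: "0 \<le> 1 - alpha P m (fst z) (snd z)" "1 - alpha P m (fst z) (snd z) \<le> 1"
    using alpha_bounds[OF P] by (auto simp: algebra_simps)
  have "\<bar>Vop P m h z\<bar> = (1 - alpha P m (fst z) (snd z)) * \<bar>integral\<^sup>L (Kcoup P m z) h\<bar>"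
    unfolding Vop_def using a by (simp add: abs_mult)
  also have "\<dots> \<le> 1 * 1" using a i by (intro mult_mono) auto
  finally show ?thesis by simp
qed

lemma Vop_one:
  assumes P: "P \<in> borel \<rightarrow>\<^sub>M prob_algebra borel"
  shows "Vop P m (\<lambda>_. 1) z = 1 - alpha P m (fst z) (snd z)"
proof -
  have K: "prob_space (Kcoup P m z)" using Kprob[OF P] by blast
  show ?thesis unfolding Vop_def using prob_space.prob_space[OF K] by simp
qed

lemma Vset_bdd:
  assumes P: "P \<in> borel \<rightarrow>\<^sub>M prob_algebra borel"
  shows "bdd_above {\<bar>Vop P m h z\<bar> | h z.
      h \<in> borel_measurable (borel \<Otimes>\<^sub>M borel) \<and> (\<forall>y. \<bar>h y\<bar> \<le> 1)}"
  by (rule bdd_aboveI[where M=1]) (use Vop_bound[OF P] in blast)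

lemma Vnorm_ge:
  assumes P: "P \<in> borel \<rightarrow>\<^sub>M prob_algebra borel"
  shows "\<bar>Vop P m (\<lambda>_. 1) z\<bar> \<le> Vnorm P m"
  unfolding Vnorm_def
proof (rule cSup_upper[OF _ Vset_bdd[OF P]])
  have "(\<lambda>_. 1::real) \<in> borel_measurable (borel \<Otimes>\<^sub>M borel)" by simp
  then show "\<bar>Vop P m (\<lambda>_. 1) z\<bar> \<in> {\<bar>Vop P m h z\<bar> | h z.
      h \<in> borel_measurable (borel \<Otimes>\<^sub>M borel) \<and> (\<forall>y. \<bar>h y\<bar> \<le> 1)}" by fastforce
qed

lemma tv_le_Vnorm:
  fixes P :: "'a::topological_space \<Rightarrow> 'a measure"
  assumes P: "P \<in> borel \<rightarrow>\<^sub>M prob_algebra borel"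
  shows "tv (mstep P m y1) (mstep P m y2) \<le> Vnorm P m"
proof (cases "y1 = y2")
  case True
  have "tv (mstep P m y1) (mstep P m y2) \<le> 0" by (rule tv_least) (simp add: True)
  also have "0 \<le> Vnorm P m" using Vnorm_ge[OF P, of m undefined] by linarith
  finally show ?thesis .
next
  case False
  have "tv (mstep P m y1) (mstep P m y2) \<le> 1 - alpha P m y1 y2"
    by (rule tv_least) (use pair_facts(9)[OF mstep_space[OF P] mstep_space[OF P], of _ m y1 m y2] in \<open>simp add: alpha_def\<close>)
  also have "\<dots> = Vop P m (\<lambda>_. 1) (y1, y2)" using Vop_one[OF P] by simp
  also have "\<dots> \<le> Vnorm P m" using Vnorm_ge[OF P, of m "(y1, y2)"] by linarith
  finally show ?thesis .
qed

theorem corollary1: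
  fixes P :: "'a::topological_space \<Rightarrow> 'a measure" and m n :: nat and x1 x2 :: 'a
  assumes "P \<in> borel \<rightarrow>\<^sub>M prob_algebra borel"
    and "m \<ge> 1"
  shows "1/2 * tv (mstep P (n * m) x1) (mstep P (n * m) x2) \<le> (Vnorm P m) ^ n"
proof -
  note P = assms(1)
  define d where "d = Vnorm P m"
  have d0: "0 \<le> d" unfolding d_def using Vnorm_ge[OF P, of m undefined] by linarith
  have tvm: "tv (mstep P m y1) (mstep P m y2) \<le> d" for y1 y2 unfolding d_def by (rule tv_le_Vnorm[OF P])
  have pr: "prob_space (mstep P k x)" "sets (mstep P k x) = sets borel" for k x using mstep_prob[OF P] by auto
  have main: "tv (mstep P (n * m) x1) (mstep P (n * m) x2) \<le> d ^ n" for x1 x2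
  proof (induction n arbitrary: x1 x2)
    case 0
    have "tv (mstep P (0 * m) x1) (mstep P (0 * m) x2) \<le> 1" by (rule tv_le1[OF pr(1) pr(1)])
    then show ?case by simp
  next
    case (Suc n)
    define \<mu> where "\<mu> = mstep P (n * m) x1"
    define \<nu> where "\<nu> = mstep P (n * m) x2"
    have e: "mstep P (Suc n * m) x = bind (mstep P (n * m) x) (mstep P m)" for x
      using mstep_add[OF P, of "n * m" m x] by (simp add: add.commute)
    show ?case
    proof (rule tv_least)
      fix A :: "'a set" assume A: "A \<in> sets borel"
      have Qm: "mstep P m \<in> borel \<rightarrow>\<^sub>M subprob_algebra borel"
        by (rule measurable_prob_algebraD[OF mstep_meas[OF P]])
      have mb: "measure (bind (mstep P (n * m) x) (mstep P m)) A = (\<integral>y. measure (mstep P m y) A \<partial>mstep P (n * m) x)" for x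
      proof (rule subprob_space.measure_bind[OF prob_space_imp_subprob_space[OF pr(1)] _ A])
        show "mstep P m \<in> mstep P (n * m) x \<rightarrow>\<^sub>M subprob_algebra borel"
          using Qm by (subst measurable_cong_sets[OF pr(2) refl])
      qed
      have gm: "(\<lambda>y. measure (mstep P m y) A) \<in> borel_measurable borel"
        by (rule measurable_compose[OF Qm measurable_measure_subprob_algebra[OF A]])
      have gd: "\<bar>measure (mstep P m y1) A - measure (mstep P m y2) A\<bar> \<le> d" for y1 y2
        using tv_upper[OF pr(1) pr(1) A, of m y1 m y2] tvm[of y1 y2] by linarith
      have "\<bar>measure (mstep P (Suc n * m) x1) A - measure (mstep P (Suc n * m) x2) A\<bar>
          = \<bar>(\<integral>y. measure (mstep P m y) A \<partial>\<mu>) - (\<integral>y. measure (mstep P m y) A \<partial>\<nu>)\<bar>"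
        unfolding e mb \<mu>_def \<nu>_def ..
      also have "\<dots> \<le> d * tv \<mu> \<nu>"
        by (rule Lg[OF _ _ gm gd]) (simp_all add: \<mu>_def \<nu>_def mstep_space[OF P])
      also have "\<dots> \<le> d * d ^ n" using Suc.IH[of x1 x2] d0 unfolding \<mu>_def \<nu>_def
        by (intro mult_left_mono) auto
      finally show "\<bar>measure (mstep P (Suc n * m) x1) A - measure (mstep P (Suc n * m) x2) A\<bar> \<le> d ^ Suc n"
        by simp
    qed
  qed
  have "0 \<le> tv (mstep P (n * m) x1) (mstep P (n * m) x2)" by (rule tv_nonneg[OF pr(1) pr(1)])
  then show ?thesis using main[of x1 x2] unfolding d_def by linarith
qed


end
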